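(* Let $G$ and $H$ be finite simple graphs without isolated vertices and let $g=(V'_0,V'_1,V'_2)$ be a $\gamma_{tR}(G\times H)$-function. Then $\gamma_{tR}(G\times H)\ge |V(G)||V(H)|-(\Delta(H)\Delta(G)-2)|V'_2|$ and $|V'_2|\ge\frac{|V(G)||V(H)|-|V'_1|}{\Delta(H)\Delta(G)}$. Moreover, if in addition $|V(G)||V(H)|=\Delta(H)\Delta(G)|V'_2|+|V'_1|$, then $\gamma_{tR}(G\times H)=|V(G)||V(H)|-(\Delta(H)\Delta(G)-2)|V'_2|$.
   Context: $\Delta(X)$ denotes the maximum degree of a graph $X$. A total Roman dominating function on a graph $X$ without isolated vertices is a map $f:V(X)\to\{0,1,2\}$, written $f=(V_0,V_1,V_2)$ with $V_i=\{v:f(v)=i\}$, such that every vertex of $V_0$ has a neighbor in $V_2$ and the subgraph induced by $V_1\cup V_2$ has no isolated vertices; $\gamma_{tR}(X)$ is the minimum of $\sum_v f(v)$ over such $f$, and a $\gamma_{tR}(X)$-function attains it. The direct product $G\times H$ has vertex set $V(G)\times V(H)$, with $(g,h)(g',h')$ an edge iff $gg'\in E(G)$ and $hh'\in E(H)$. *)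

theory Defs
  imports Complex_Main
begin

definition simple_graph :: "'a set \<Rightarrow> ('a \<Rightarrow> 'a \<Rightarrow> bool) \<Rightarrow> bool" where
  "simple_graph V E \<longleftrightarrow> finite V \<and> (\<forall>u v. E u v \<longrightarrow> u \<in> V \<and> v \<in> V)
     \<and> (\<forall>u v. E u v \<longrightarrow> E v u) \<and> (\<forall>v. \<not> E v v)"

definition neighbors :: "'a set \<Rightarrow> ('a \<Rightarrow> 'a \<Rightarrow> bool) \<Rightarrow> 'a \<Rightarrow> 'a set" where
  "neighbors V E v = {u \<in> V. E v u}"

definition degree :: "'a set \<Rightarrow> ('a \<Rightarrow> 'a \<Rightarrow> bool) \<Rightarrow> 'a \<Rightarrow> nat" where
  "degree V E v = card (neighbors V E v)"

definition max_degree :: "'a set \<Rightarrow> ('a \<Rightarrow> 'a \<Rightarrow> bool) \<Rightarrow> nat" where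
  "max_degree V E = Max (degree V E ` V)"

definition no_isolated :: "'a set \<Rightarrow> ('a \<Rightarrow> 'a \<Rightarrow> bool) \<Rightarrow> bool" where
  "no_isolated V E \<longleftrightarrow> (\<forall>v\<in>V. \<exists>u\<in>V. E v u)"

definition dprod_V :: "'a set \<Rightarrow> 'b set \<Rightarrow> ('a \<times> 'b) set" where
  "dprod_V VG VH = VG \<times> VH"

definition dprod_E :: "('a \<Rightarrow> 'a \<Rightarrow> bool) \<Rightarrow> ('b \<Rightarrow> 'b \<Rightarrow> bool)
    \<Rightarrow> ('a \<times> 'b) \<Rightarrow> ('a \<times> 'b) \<Rightarrow> bool" where
  "dprod_E EG EH x y \<longleftrightarrow> EG (fst x) (fst y) \<and> EH (snd x) (snd y)"

definition is_TRDF :: "'a set \<Rightarrow> ('a \<Rightarrow> 'a \<Rightarrow> bool) \<Rightarrow> ('a \<Rightarrow> nat) \<Rightarrow> bool" where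
  "is_TRDF V E f \<longleftrightarrow>
     (\<forall>v\<in>V. f v \<le> 2) \<and> (\<forall>v. v \<notin> V \<longrightarrow> f v = 0)
     \<and> (\<forall>v\<in>V. f v = 0 \<longrightarrow> (\<exists>u\<in>V. E v u \<and> f u = 2))
     \<and> (\<forall>v\<in>V. f v \<ge> 1 \<longrightarrow> (\<exists>u\<in>V. E v u \<and> f u \<ge> 1))"

definition weight :: "'a set \<Rightarrow> ('a \<Rightarrow> nat) \<Rightarrow> nat" where
  "weight V f = (\<Sum>v\<in>V. f v)"

definition gamma_tR :: "'a set \<Rightarrow> ('a \<Rightarrow> 'a \<Rightarrow> bool) \<Rightarrow> nat" where
  "gamma_tR V E = (LEAST w. \<exists>f. is_TRDF V E f \<and> weight V f = w)"

definition is_gamma_tR_function :: "'a set \<Rightarrow> ('a \<Rightarrow> 'a \<Rightarrow> bool) \<Rightarrow> ('a \<Rightarrow> nat) \<Rightarrow> bool" where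
  "is_gamma_tR_function V E f \<longleftrightarrow> is_TRDF V E f \<and> weight V f = gamma_tR V E"

definition level_set :: "'a set \<Rightarrow> ('a \<Rightarrow> nat) \<Rightarrow> nat \<Rightarrow> 'a set" where
  "level_set V f i = {v \<in> V. f v = i}"

end

theory Submission
  imports Defs
begin


lemma prod_deg_le:
  assumes "simple_graph VG EG" "simple_graph VH EH" "v \<in> VG \<times> VH"
  shows "card (neighbors (VG \<times> VH) (dprod_E EG EH) v) \<le> max_degree VH EH * max_degree VG EG"
proof -
  obtain a b where v: "v = (a,b)" "a \<in> VG" "b \<in> VH" using assms(3) by auto
  have fG: "finite VG" and fH: "finite VH" using assms unfolding simple_graph_def by auto
  have eq: "neighbors (VG \<times> VH) (dprod_E EG EH) v = neighbors VG EG a \<times> neighbors VH EH b"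
    unfolding neighbors_def dprod_E_def v by auto
  have "degree VG EG a \<le> max_degree VG EG" unfolding max_degree_def
    using fG v by (intro Max_ge) auto
  moreover have "degree VH EH b \<le> max_degree VH EH" unfolding max_degree_def
    using fH v by (intro Max_ge) auto
  ultimately have "degree VG EG a * degree VH EH b \<le> max_degree VH EH * max_degree VG EG"
    by (metis mult.commute mult_le_mono)
  then show ?thesis unfolding eq card_cartesian_product degree_def .
qed

lemma count_lemma:
  fixes V :: "'c set" and E f
  assumes fin: "finite V" and tr: "is_TRDF V E f" and sym: "\<And>u v. E u v \<Longrightarrow> E v u"
    and deg: "\<And>v. v \<in> V \<Longrightarrow> card (neighbors V E v) \<le> D"
  shows "card (level_set V f 0) + card (level_set V f 2) \<le> D * card (level_set V f 2)"
proof -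
  let ?A0 = "level_set V f 0" and ?A2 = "level_set V f 2"
  let ?N = "\<lambda>v. neighbors V E v"
  have fA2: "finite ?A2" using fin unfolding level_set_def by auto
  have sub: "?A0 \<subseteq> (\<Union>v\<in>?A2. ?N v \<inter> ?A0)"
  proof
    fix x assume x: "x \<in> ?A0"
    then obtain u where "u \<in> V" "E x u" "f u = 2" using tr unfolding is_TRDF_def level_set_def by auto
    moreover have "E u x" using sym \<open>E x u\<close> .
    ultimately show "x \<in> (\<Union>v\<in>?A2. ?N v \<inter> ?A0)" using x unfolding level_set_def neighbors_def by auto
  qed
  have each: "card (?N v \<inter> ?A0) + 1 \<le> D" if v: "v \<in> ?A2" for v
  proof -
    obtain u where u: "u \<in> V" "E v u" "f u \<ge> 1" using tr v unfolding is_TRDF_def level_set_def by force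
    have fN: "finite (?N v)" using fin unfolding neighbors_def by auto
    have uN: "u \<in> ?N v" using u unfolding neighbors_def by auto
    have "?N v \<inter> ?A0 \<subseteq> ?N v - {u}" using u unfolding level_set_def by auto
    hence "card (?N v \<inter> ?A0) \<le> card (?N v - {u})" using fN by (intro card_mono) auto
    also have "\<dots> = card (?N v) - 1" using uN fN by simp
    finally have a: "card (?N v \<inter> ?A0) \<le> card (?N v) - 1" .
    have "card (?N v) > 0" using uN fN card_gt_0_iff by blast
    with a have "card (?N v \<inter> ?A0) + 1 \<le> card (?N v)" by linarith
    also have "\<dots> \<le> D" using deg v unfolding level_set_def by auto
    finally show ?thesis .
  qed
  have "card ?A0 \<le> card (\<Union>v\<in>?A2. ?N v \<inter> ?A0)"
    using sub fA2 fin by (intro card_mono) (auto simp: neighbors_def)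
  also have "\<dots> \<le> (\<Sum>v\<in>?A2. card (?N v \<inter> ?A0))" by (rule card_UN_le[OF fA2])
  moreover have "(\<Sum>v\<in>?A2. card (?N v \<inter> ?A0) + 1) = (\<Sum>v\<in>?A2. card (?N v \<inter> ?A0)) + card ?A2"
    by (subst sum.distrib) simp
  ultimately have "card ?A0 + card ?A2 \<le> (\<Sum>v\<in>?A2. card (?N v \<inter> ?A0) + 1)"
    by linarith
  also have "\<dots> \<le> (\<Sum>v\<in>?A2. D)" using each by (intro sum_mono) auto
  finally show ?thesis by (simp add: mult.commute)
qed

lemma weight_card:
  assumes fin: "finite V" and tr: "is_TRDF V E f"
  shows "weight V f = card (level_set V f 1) + 2 * card (level_set V f 2)"
    and "card V = card (level_set V f 0) + card (level_set V f 1) + card (level_set V f 2)"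
proof -
  have le: "\<And>v. v \<in> V \<Longrightarrow> f v \<le> 2" using tr unfolding is_TRDF_def by auto
  have ls: "level_set V f i = V \<inter> {v. f v = i}" for i unfolding level_set_def by auto
  have "weight V f = (\<Sum>v\<in>V. of_bool (f v = 1) + 2 * of_bool (f v = 2))"
    unfolding weight_def
  proof (rule sum.cong)
    fix v assume "v \<in> V" then have "f v \<le> 2" by (rule le)
    then show "f v = of_bool (f v = 1) + 2 * of_bool (f v = 2)" proof -
      have "f v = 0 \<or> f v = 1 \<or> f v = 2" using \<open>f v \<le> 2\<close> by arith
      then show ?thesis by auto
    qed
  qed simp
  also have "\<dots> = (\<Sum>v\<in>V. of_bool (f v = 1)) + 2 * (\<Sum>v\<in>V. of_bool (f v = 2))"
    by (simp only: sum.distrib sum_distrib_left)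
  also have "\<dots> = card (level_set V f 1) + 2 * card (level_set V f 2)"
    using fin by (simp only: sum_of_bool_eq ls of_nat_id)
  finally show "weight V f = card (level_set V f 1) + 2 * card (level_set V f 2)" .
  have "card V = (\<Sum>v\<in>V. of_bool (f v = 0) + of_bool (f v = 1) + of_bool (f v = 2))"
    unfolding card_eq_sum
  proof (rule sum.cong)
    fix v assume "v \<in> V" then have "f v \<le> 2" by (rule le)
    then have "f v = 0 \<or> f v = 1 \<or> f v = 2" by arith
    then show "(1::nat) = of_bool (f v = 0) + of_bool (f v = 1) + of_bool (f v = 2)" by auto
  qed simp
  also have "\<dots> = card (level_set V f 0) + card (level_set V f 1) + card (level_set V f 2)"
    using fin by (simp only: sum.distrib sum_of_bool_eq ls of_nat_id)
  finally show "card V = card (level_set V f 0) + card (level_set V f 1) + card (level_set V f 2)" .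
qed

theorem corollary4p2:
  fixes VG :: "'a set" and EG :: "'a \<Rightarrow> 'a \<Rightarrow> bool"
    and VH :: "'b set" and EH :: "'b \<Rightarrow> 'b \<Rightarrow> bool"
    and g :: "'a \<times> 'b \<Rightarrow> nat"
  assumes "simple_graph VG EG" and "no_isolated VG EG"
    and "simple_graph VH EH" and "no_isolated VH EH"
    and "is_gamma_tR_function (dprod_V VG VH) (dprod_E EG EH) g"
  shows "(int (gamma_tR (dprod_V VG VH) (dprod_E EG EH))
           \<ge> int (card VG) * int (card VH)
             - (int (max_degree VH EH) * int (max_degree VG EG) - 2)
               * int (card (level_set (dprod_V VG VH) g 2)))
    \<and> (real (card (level_set (dprod_V VG VH) g 2))
           \<ge> (real (card VG) * real (card VH) - real (card (level_set (dprod_V VG VH) g 1)))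
             / (real (max_degree VH EH) * real (max_degree VG EG)))
    \<and> (card VG * card VH = max_degree VH EH * max_degree VG EG
             * card (level_set (dprod_V VG VH) g 2) + card (level_set (dprod_V VG VH) g 1)
         \<longrightarrow> int (gamma_tR (dprod_V VG VH) (dprod_E EG EH))
           = int (card VG) * int (card VH)
             - (int (max_degree VH EH) * int (max_degree VG EG) - 2)
               * int (card (level_set (dprod_V VG VH) g 2)))"
  proof -
  let ?V = "dprod_V VG VH" and ?E = "dprod_E EG EH"
  let ?D = "max_degree VH EH * max_degree VG EG"
  have fin: "finite ?V" using assms(1,3) unfolding simple_graph_def dprod_V_def by auto
  have tr: "is_TRDF ?V ?E g" and gw: "weight ?V g = gamma_tR ?V ?E"
    using assms(5) unfolding is_gamma_tR_function_def by auto
  have sym: "\<And>u v. ?E u v \<Longrightarrow> ?E v u"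
    using assms(1,3) unfolding simple_graph_def dprod_E_def by auto
  have c: "card (level_set ?V g 0) + card (level_set ?V g 2) \<le> ?D * card (level_set ?V g 2)"
    using count_lemma[OF fin tr sym] prod_deg_le[OF assms(1,3)] unfolding dprod_V_def by blast
  have w: "gamma_tR ?V ?E = card (level_set ?V g 1) + 2 * card (level_set ?V g 2)"
    using weight_card(1)[OF fin tr] gw by simp
  have cV: "card VG * card VH = card (level_set ?V g 0) + card (level_set ?V g 1) + card (level_set ?V g 2)"
    using weight_card(2)[OF fin tr] unfolding dprod_V_def by (simp add: card_cartesian_product)
  have p1: "int (gamma_tR ?V ?E) \<ge> int (card VG) * int (card VH) - (int (max_degree VH EH) * int (max_degree VG EG) - 2) * int (card (level_set ?V g 2))"
  proof -
    have "int (card VG) * int (card VH) = int (card VG * card VH)" by simp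
    have ci: "int (card (level_set ?V g 0)) + int (card (level_set ?V g 2)) \<le> int (max_degree VH EH) * int (max_degree VG EG) * int (card (level_set ?V g 2))"
      using c by (metis of_nat_add of_nat_le_iff of_nat_mult)
    have cVi: "int (card VG) * int (card VH) = int (card (level_set ?V g 0)) + int (card (level_set ?V g 1)) + int (card (level_set ?V g 2))"
      using cV by (metis of_nat_add of_nat_mult)
    show ?thesis using ci cVi w by (simp add: algebra_simps)
  qed
  have p2: "real (card (level_set ?V g 2)) \<ge> (real (card VG) * real (card VH) - real (card (level_set ?V g 1))) / (real (max_degree VH EH) * real (max_degree VG EG))"
  proof (cases "?D = 0")
    case True
    then have "real (max_degree VH EH) * real (max_degree VG EG) = 0" by (simp only: of_nat_mult[symmetric] of_nat_eq_0_iff)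
    then show ?thesis by (simp only: div_by_0 of_nat_0_le_iff)
  next
    case False
    then have pos: "real (max_degree VH EH) * real (max_degree VG EG) > 0" by simp
    have cr: "real (card (level_set ?V g 0)) + real (card (level_set ?V g 2)) \<le> real (max_degree VH EH) * real (max_degree VG EG) * real (card (level_set ?V g 2))"
      using c by (metis of_nat_add of_nat_le_iff of_nat_mult)
    have cVr: "real (card VG) * real (card VH) = real (card (level_set ?V g 0)) + real (card (level_set ?V g 1)) + real (card (level_set ?V g 2))"
      using cV by (metis of_nat_add of_nat_mult)
    show ?thesis using pos cr cVr by (simp add: divide_le_eq algebra_simps)
  qed
  have p3: "card VG * card VH = ?D * card (level_set ?V g 2) + card (level_set ?V g 1) \<longrightarrow>
      int (gamma_tR ?V ?E) = int (card VG) * int (card VH) - (int (max_degree VH EH) * int (max_degree VG EG) - 2) * int (card (level_set ?V g 2))"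
  proof
    assume h: "card VG * card VH = ?D * card (level_set ?V g 2) + card (level_set ?V g 1)"
    have "int (card VG) * int (card VH) = int (max_degree VH EH) * int (max_degree VG EG) * int (card (level_set ?V g 2)) + int (card (level_set ?V g 1))"
      using h by (metis of_nat_add of_nat_mult)
    then show "int (gamma_tR ?V ?E) = int (card VG) * int (card VH) - (int (max_degree VH EH) * int (max_degree VG EG) - 2) * int (card (level_set ?V g 2))"
      using w by (simp add: algebra_simps)
  qed
  show ?thesis using p1 p2 p3 by blast
qed

end
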